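(* Let $(G,\sigma)$ be a finite connected signed graph satisfying $CD_{p}^{\sigma}(K,N)$ with $p\geq2$, $N>1$ and $K>0$. Then the first (smallest) nonzero eigenvalue $\lambda_p^\sigma$ of $\Delta_p^\sigma$ satisfies \[ \lambda_{p}^{\sigma}\geq\left(\frac{1}{\mathrm{vol}(G)}\right)^{\frac{p-2}{2}}\left(\frac{NK}{N-1}\right)^{\frac{p}{2}}, \] where $\mathrm{vol}(G)=\sum_{x\in V}d_x$.
   Context: $G=(V,E)$ is a finite simple connected graph with degrees $d_x$; $\sigma:E\to\{\pm1\}$, $\sigma_{xy}=\sigma(\{x,y\})$. For $p>1$: $\Delta_{p}^{\sigma}f(x)=\frac{1}{d_{x}}\sum_{y\sim x}|\sigma_{xy}f(y)-f(x)|^{p-2}(\sigma_{xy}f(y)-f(x))$ (with $|t|^{p-2}t=0$ at $t=0$); eigenvalue $\lambda$: $-\Delta_{p}^{\sigma}f=\lambda|f|^{p-2}f$ for some nonzero $f$. $\Gamma_p^\sigma(f,g)(x)=\frac{1}{2d_{x}}\sum_{y\sim x}|\sigma_{xy}f(y)-f(x)|^{p-2}(\sigma_{xy}f(y)-f(x))(\sigma_{xy}g(y)-g(x))$; $\mathscr{L}^\sigma_{p,f}\varphi(x)=\frac{1}{d_{x}}\sum_{y\sim x}|\sigma_{xy}f(y)-f(x)|^{p-2}(\varphi(y)-\varphi(x))$; $\Gamma_{p,2}^\sigma(f,f)(x)=\frac12\mathscr{L}_{p,f}^\sigma(\Gamma^\sigma_p(f,f))(x)-\Gamma_p^\sigma(f,\Delta_p^\sigma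 f)(x)$. $(G,\sigma)$ satisfies $CD_p^\sigma(K,N)$ if at every $x\in V$, $\Gamma_{p,2}^{\sigma}(f,f)(x)\geq\frac{1}{N}(\Delta_{p}^{\sigma}f(x))^{2}+K(\Gamma^{\sigma}_{p}(f,f)(x))^{\frac{2p-2}{p}}$ for every $f:V\to\mathbb{R}$ with $\sigma_{xy}f(y)-f(x)\neq0$ for every $y\sim x$ ($\frac1N=0$ if $N=\infty$). *)

theory Defs
  imports Complex_Main
begin

definition signed_graph :: "'a set \<Rightarrow> ('a \<Rightarrow> 'a \<Rightarrow> bool) \<Rightarrow> ('a \<Rightarrow> 'a \<Rightarrow> real) \<Rightarrow> bool" where
  "signed_graph V E \<sigma> \<longleftrightarrow>
     finite V \<and> V \<noteq> {} \<and>
     (\<forall>x y. E x y \<longrightarrow> x \<in> V \<and> y \<in> V \<and> x \<noteq> y \<and> E y x) \<and>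
     (\<forall>x y. E x y \<longrightarrow> \<sigma> x y = \<sigma> y x \<and> (\<sigma> x y = 1 \<or> \<sigma> x y = -1)) \<and>
     (\<forall>x\<in>V. \<forall>y\<in>V. E\<^sup>*\<^sup>* x y)"

definition nbrs :: "'a set \<Rightarrow> ('a \<Rightarrow> 'a \<Rightarrow> bool) \<Rightarrow> 'a \<Rightarrow> 'a set" where
  "nbrs V E x = {y \<in> V. E x y}"

definition deg :: "'a set \<Rightarrow> ('a \<Rightarrow> 'a \<Rightarrow> bool) \<Rightarrow> 'a \<Rightarrow> real" where
  "deg V E x = real (card (nbrs V E x))"

definition vol :: "'a set \<Rightarrow> ('a \<Rightarrow> 'a \<Rightarrow> bool) \<Rightarrow> real" where
  "vol V E = (\<Sum>x\<in>V. deg V E x)"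

text \<open>|t|^(p-2) t, which is 0 at t = 0 (note 0 powr a = 0 in Isabelle).\<close>
definition pw :: "real \<Rightarrow> real \<Rightarrow> real" where
  "pw p t = \<bar>t\<bar> powr (p - 2) * t"

definition sDelta :: "'a set \<Rightarrow> ('a \<Rightarrow> 'a \<Rightarrow> bool) \<Rightarrow> ('a \<Rightarrow> 'a \<Rightarrow> real) \<Rightarrow> real
    \<Rightarrow> ('a \<Rightarrow> real) \<Rightarrow> 'a \<Rightarrow> real" where
  "sDelta V E \<sigma> p f x =
     (1 / deg V E x) * (\<Sum>y\<in>nbrs V E x. pw p (\<sigma> x y * f y - f x))"

definition sGamma :: "'a set \<Rightarrow> ('a \<Rightarrow> 'a \<Rightarrow> bool) \<Rightarrow> ('a \<Rightarrow> 'a \<Rightarrow> real) \<Rightarrow> real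
    \<Rightarrow> ('a \<Rightarrow> real) \<Rightarrow> ('a \<Rightarrow> real) \<Rightarrow> 'a \<Rightarrow> real" where
  "sGamma V E \<sigma> p f g x =
     (1 / (2 * deg V E x)) * (\<Sum>y\<in>nbrs V E x.
        \<bar>\<sigma> x y * f y - f x\<bar> powr (p - 2) * (\<sigma> x y * f y - f x) * (\<sigma> x y * g y - g x))"

definition sL :: "'a set \<Rightarrow> ('a \<Rightarrow> 'a \<Rightarrow> bool) \<Rightarrow> ('a \<Rightarrow> 'a \<Rightarrow> real) \<Rightarrow> real
    \<Rightarrow> ('a \<Rightarrow> real) \<Rightarrow> ('a \<Rightarrow> real) \<Rightarrow> 'a \<Rightarrow> real" where
  "sL V E \<sigma> p f \<phi> x =
     (1 / deg V E x) * (\<Sum>y\<in>nbrs V E x. \<bar>\<sigma> x y * f y - f x\<bar> powr (p - 2) * (\<phi> y - \<phi> x))"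

definition sGamma2 :: "'a set \<Rightarrow> ('a \<Rightarrow> 'a \<Rightarrow> bool) \<Rightarrow> ('a \<Rightarrow> 'a \<Rightarrow> real) \<Rightarrow> real
    \<Rightarrow> ('a \<Rightarrow> real) \<Rightarrow> 'a \<Rightarrow> real" where
  "sGamma2 V E \<sigma> p f x =
     (1 / 2) * sL V E \<sigma> p f (sGamma V E \<sigma> p f f) x - sGamma V E \<sigma> p f (sDelta V E \<sigma> p f) x"

definition CDp :: "'a set \<Rightarrow> ('a \<Rightarrow> 'a \<Rightarrow> bool) \<Rightarrow> ('a \<Rightarrow> 'a \<Rightarrow> real) \<Rightarrow> real
    \<Rightarrow> real \<Rightarrow> real \<Rightarrow> bool" where
  "CDp V E \<sigma> p K N \<longleftrightarrow>
     (\<forall>x\<in>V. \<forall>f :: 'a \<Rightarrow> real.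
        (\<forall>y\<in>nbrs V E x. \<sigma> x y * f y - f x \<noteq> 0) \<longrightarrow>
        sGamma2 V E \<sigma> p f x \<ge> (1 / N) * (sDelta V E \<sigma> p f x)\<^sup>2
                                 + K * (sGamma V E \<sigma> p f f x) powr ((2 * p - 2) / p))"

definition is_eigenvalue :: "'a set \<Rightarrow> ('a \<Rightarrow> 'a \<Rightarrow> bool) \<Rightarrow> ('a \<Rightarrow> 'a \<Rightarrow> real) \<Rightarrow> real
    \<Rightarrow> real \<Rightarrow> bool" where
  "is_eigenvalue V E \<sigma> p lam \<longleftrightarrow>
     (\<exists>f :: 'a \<Rightarrow> real. (\<exists>x\<in>V. f x \<noteq> 0) \<and>
        (\<forall>x\<in>V. - sDelta V E \<sigma> p f x = lam * pw p (f x)))"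

definition first_nonzero_eigenvalue :: "'a set \<Rightarrow> ('a \<Rightarrow> 'a \<Rightarrow> bool) \<Rightarrow> ('a \<Rightarrow> 'a \<Rightarrow> real)
    \<Rightarrow> real \<Rightarrow> real \<Rightarrow> bool" where
  "first_nonzero_eigenvalue V E \<sigma> p lam \<longleftrightarrow>
     is_eigenvalue V E \<sigma> p lam \<and> lam \<noteq> 0 \<and>
     (\<forall>mu. is_eigenvalue V E \<sigma> p mu \<and> mu \<noteq> 0 \<longrightarrow> lam \<le> mu)"

end

theory Submission imports Defs "HOL-Analysis.Analysis" begin


lemma powr_convex0:
  fixes q :: real assumes "q \<ge> 1" shows "convex_on {0..} (\<lambda>x. x powr q)"
proof (rule convex_onI)
  fix t x y :: real
  assume t: "t > 0" "t < 1" and x: "x \<in> {0..}" and y: "y \<in> {0..}"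
  show "((1 - t) *\<^sub>R x + t *\<^sub>R y) powr q \<le> (1 - t) * x powr q + t * y powr q"
  proof (cases "x > 0 \<and> y > 0")
    case True
    then show ?thesis using convex_onD[OF powr_convex[OF assms], of t x y] t by auto
  next
    case False
    then consider "x = 0" | "y = 0" using x y by force
    then show ?thesis
    proof cases
      case 1
      have "(t * y) powr q = t powr q * y powr q" using t y by (simp add: powr_mult)
      also have "\<dots> \<le> t * y powr q"
        using t assms by (intro mult_right_mono) (auto intro: powr_le_one_le)
      finally show ?thesis using 1 by simp
    next
      case 2
      have "((1-t) * x) powr q = (1-t) powr q * x powr q" using t x by (simp add: powr_mult)
      also have "\<dots> \<le> (1-t) * x powr q"
        using t assms by (intro mult_right_mono) (auto intro: powr_le_one_le)
      finally show ?thesis using 2 by simp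
    qed
  qed
qed simp

lemma jensen_powr:
  fixes w u :: "'b \<Rightarrow> real"
  assumes "finite A" "A \<noteq> {}" "\<And>i. i \<in> A \<Longrightarrow> w i \<ge> 0" "\<And>i. i \<in> A \<Longrightarrow> u i \<ge> 0"
    and "q \<ge> 1" and Wt: "(\<Sum>i\<in>A. w i) > 0"
  shows "(\<Sum>i\<in>A. w i) powr (1 - q) * (\<Sum>i\<in>A. w i * u i) powr q \<le> (\<Sum>i\<in>A. w i * u i powr q)"
proof -
  define T where "T = (\<Sum>i\<in>A. w i)"
  have T: "T > 0" using Wt T_def by simp
  have "(\<Sum>i\<in>A. (w i / T) *\<^sub>R u i) powr q \<le> (\<Sum>i\<in>A. (w i / T) * u i powr q)"
    apply (rule convex_on_sum[OF assms(1,2) powr_convex0[OF assms(5)]])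
    using assms T by (auto simp: T_def sum_divide_distrib[symmetric])
  moreover have "(\<Sum>i\<in>A. (w i / T) *\<^sub>R u i) = (\<Sum>i\<in>A. w i * u i) / T"
    by (simp add: sum_divide_distrib)
  moreover have "(\<Sum>i\<in>A. (w i / T) * u i powr q) = (\<Sum>i\<in>A. w i * u i powr q) / T"
    by (simp add: sum_divide_distrib)
  ultimately have *: "((\<Sum>i\<in>A. w i * u i) / T) powr q \<le> (\<Sum>i\<in>A. w i * u i powr q) / T" by simp
  have nn: "(\<Sum>i\<in>A. w i * u i) \<ge> 0" using assms by (auto intro: sum_nonneg)
  have "((\<Sum>i\<in>A. w i * u i) / T) powr q = (\<Sum>i\<in>A. w i * u i) powr q / T powr q"
    using nn T by (simp add: powr_divide)
  with * have a: "(\<Sum>i\<in>A. w i * u i) powr q / T powr q \<le> (\<Sum>i\<in>A. w i * u i powr q) / T" by simp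
  have key: "T powr (1 - q) * a \<le> b" if "a / T powr q \<le> b / T" for a b
  proof -
    have "T powr (1 - q) = T / T powr q" using T by (simp add: powr_diff)
    moreover have "a * T / T powr q \<le> b" using that T
      by (simp add: divide_simps mult.commute)
    ultimately show ?thesis by (simp add: field_simps)
  qed
  from key[OF a] have "T powr (1 - q) * (\<Sum>i\<in>A. w i * u i) powr q \<le> (\<Sum>i\<in>A. w i * u i powr q)" .
  then show ?thesis by (simp add: T_def)
qed




definition W :: "real \<Rightarrow> real \<Rightarrow> real" where
  "W p u = (if p = 2 then 1 else \<bar>u\<bar> powr (p - 2))"

lemma W_pw: "p \<ge> 2 \<Longrightarrow> \<bar>u\<bar> powr (p - 2) * u = W p u * u"
  by (auto simp: W_def)

lemma pw_W: "p \<ge> 2 \<Longrightarrow> pw p u = W p u * u"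
  by (simp add: pw_def W_pw)

lemma W_nz: "u \<noteq> 0 \<Longrightarrow> \<bar>u\<bar> powr (p - 2) = W p u"
  by (auto simp: W_def)

lemma W_abs: "W p \<bar>u\<bar> = W p u"
  by (simp add: W_def)

lemma W_nonneg: "W p u \<ge> 0"
  by (simp add: W_def)

lemma W_cont: assumes "p \<ge> 2" shows "isCont (W p) u"
proof (cases "p = 2")
  case True
  then have "W p = (\<lambda>_. 1)" by (auto simp: W_def fun_eq_iff)
  then show ?thesis by simp
next
  case False
  then have "continuous_on UNIV (\<lambda>u. \<bar>u\<bar> powr (p - 2))"
    using assms by (intro continuous_on_powr') (auto intro!: continuous_intros)
  then have "continuous_on UNIV (W p)" using False by (simp add: W_def)
  then show ?thesis by (simp add: continuous_on_eq_continuous_at)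
qed

lemma W_cont_intro[continuous_intros]:
  fixes g :: "real \<Rightarrow> real" shows "p \<ge> 2 \<Longrightarrow> isCont g t \<Longrightarrow> isCont (\<lambda>t. W p (g t)) t"
  by (rule Topological_Spaces.isCont_o2) (auto intro: W_cont)

lemma pw_minus: "pw p (- u) = - pw p u"
  by (simp add: pw_def)

lemma pw_sign: "s = 1 \<or> s = -1 \<Longrightarrow> pw p (s * u) = s * pw p u"
  by (auto simp: pw_def)

lemma pw_nz: "u \<noteq> 0 \<Longrightarrow> pw p u \<noteq> 0"
  by (simp add: pw_def)

lemma f_pw: "u * pw p u = \<bar>u\<bar> powr p"
proof (cases "u = 0")
  case False
  have "u * pw p u = \<bar>u\<bar> powr (p - 2) * u\<^sup>2" by (simp add: pw_def power2_eq_square)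
  also have "u\<^sup>2 = \<bar>u\<bar> powr 2" using False by (simp add: powr_numeral)
  also have "\<bar>u\<bar> powr (p - 2) * \<bar>u\<bar> powr 2 = \<bar>u\<bar> powr p"
    by (subst powr_add[symmetric]) simp
  finally show ?thesis .
qed (simp add: pw_def)

lemma pw_sq: "(pw p u)\<^sup>2 = \<bar>u\<bar> powr p * \<bar>u\<bar> powr (p - 2)"
proof -
  have "(pw p u)\<^sup>2 = \<bar>u\<bar> powr (p - 2) * (u * pw p u)" by (simp add: power2_eq_square pw_def[of p u])
  then show ?thesis by (simp add: f_pw)
qed

lemma sDelta_W: "p \<ge> 2 \<Longrightarrow> sDelta V E \<sigma> p f x =
   (1 / deg V E x) * (\<Sum>y\<in>nbrs V E x. W p (\<sigma> x y * f y - f x) * (\<sigma> x y * f y - f x))"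
  by (simp add: sDelta_def pw_W)

lemma sGamma_W: "p \<ge> 2 \<Longrightarrow> sGamma V E \<sigma> p f g x =
   (1 / (2 * deg V E x)) * (\<Sum>y\<in>nbrs V E x.
        W p (\<sigma> x y * f y - f x) * (\<sigma> x y * f y - f x) * (\<sigma> x y * g y - g x))"
  by (simp add: sGamma_def W_pw)

lemma cont_Del: "p \<ge> 2 \<Longrightarrow> isCont (\<lambda>t. sDelta V E \<sigma> p (\<lambda>z. f z + t * h z) y) t0"
  by (simp only: sDelta_W) (intro continuous_intros; simp)

lemma cont_Gam: "p \<ge> 2 \<Longrightarrow> isCont (\<lambda>t. sGamma V E \<sigma> p (\<lambda>z. f z + t * h z) (\<lambda>z. f z + t * h z) y) t0"
  by (simp only: sGamma_W) (intro continuous_intros; simp)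

lemma cont_GD: "p \<ge> 2 \<Longrightarrow> isCont (\<lambda>t. sGamma V E \<sigma> p (\<lambda>z. f z + t * h z) (sDelta V E \<sigma> p (\<lambda>z. f z + t * h z)) y) t0"
  by (simp only: sGamma_W) (intro continuous_intros cont_Del; simp)

definition G2W :: "'a set \<Rightarrow> ('a \<Rightarrow> 'a \<Rightarrow> bool) \<Rightarrow> ('a \<Rightarrow> 'a \<Rightarrow> real) \<Rightarrow> real
    \<Rightarrow> ('a \<Rightarrow> real) \<Rightarrow> 'a \<Rightarrow> real" where
  "G2W V E \<sigma> p f x = 1 / 2 * ((1 / deg V E x) * (\<Sum>y\<in>nbrs V E x. W p (\<sigma> x y * f y - f x)
      * (sGamma V E \<sigma> p f f y - sGamma V E \<sigma> p f f x))) - sGamma V E \<sigma> p f (sDelta V E \<sigma> p f) x"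

lemma G2W_eq: "(\<forall>y\<in>nbrs V E x. \<sigma> x y * f y - f x \<noteq> 0) \<Longrightarrow> sGamma2 V E \<sigma> p f x = G2W V E \<sigma> p f x"
  unfolding sGamma2_def G2W_def sL_def by (simp add: W_nz)

lemma cont_G2W: "p \<ge> 2 \<Longrightarrow> isCont (\<lambda>t. G2W V E \<sigma> p (\<lambda>z. f z + t * h z) x) t0"
  unfolding G2W_def by (intro continuous_intros cont_GD cont_Gam; simp)




lemma sGamma_nonneg: "sGamma V E \<sigma> p f f x \<ge> 0"
  unfolding sGamma_def
proof (rule mult_nonneg_nonneg)
  show "0 \<le> (\<Sum>y\<in>nbrs V E x. \<bar>\<sigma> x y * f y - f x\<bar> powr (p - 2) * (\<sigma> x y * f y - f x) * (\<sigma> x y * f y - f x))"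
    by (rule sum_nonneg) (simp add: mult.assoc)
qed (simp add: deg_def)

lemma fin_nbrs: "signed_graph V E \<sigma> \<Longrightarrow> finite (nbrs V E x)"
  by (auto simp: signed_graph_def nbrs_def)

lemma CD_ext:
  assumes G: "signed_graph V E \<sigma>" and CD: "CDp V E \<sigma> p K N" and p: "p \<ge> 2" and x: "x \<in> V"
  shows "G2W V E \<sigma> p f x \<ge> (1/N) * (sDelta V E \<sigma> p f x)\<^sup>2
           + K * (sGamma V E \<sigma> p f f x) powr ((2*p-2)/p)"
proof -
  define h where "h = (\<lambda>z. if z = x then (1::real) else 0)"
  define g where "g = (\<lambda>t z. f z + t * h z)"
  define F where "F = (\<lambda>t. G2W V E \<sigma> p (g t) x - ((1/N) * (sDelta V E \<sigma> p (g t) x)\<^sup>2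
           + K * (sGamma V E \<sigma> p (g t) (g t) x) powr ((2*p-2)/p)))"
  have fin: "finite (nbrs V E x)" using G by (rule fin_nbrs)
  have ev: "eventually (\<lambda>t. \<forall>y\<in>nbrs V E x. \<sigma> x y * g t y - g t x \<noteq> 0) (at_right 0)"
  proof (rule eventually_ball_finite[OF fin], rule ballI)
    fix y assume y: "y \<in> nbrs V E x"
    then have yx: "y \<noteq> x" using G by (auto simp: nbrs_def signed_graph_def)
    define c where "c = \<sigma> x y * f y - f x"
    have "eventually (\<lambda>t. t \<noteq> c) (at_right (0::real))"
      unfolding eventually_at_right_field
      by (rule exI[of _ "if c > 0 then c else 1"]) auto
    then show "eventually (\<lambda>t. \<sigma> x y * g t y - g t x \<noteq> 0) (at_right 0)"
      by eventually_elim (auto simp: g_def h_def yx c_def)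
  qed
  have ev2: "eventually (\<lambda>t. F t \<ge> 0) (at_right 0)"
    using ev
  proof eventually_elim
    case (elim t)
    then have "sGamma2 V E \<sigma> p (g t) x = G2W V E \<sigma> p (g t) x" by (rule G2W_eq)
    moreover have "(\<forall>y\<in>nbrs V E x. \<sigma> x y * g t y - g t x \<noteq> 0) \<longrightarrow>
        sGamma2 V E \<sigma> p (g t) x \<ge> (1 / N) * (sDelta V E \<sigma> p (g t) x)\<^sup>2
                                 + K * (sGamma V E \<sigma> p (g t) (g t) x) powr ((2 * p - 2) / p)"
      using CD x unfolding CDp_def by blast
    ultimately show ?case using elim by (simp add: F_def)
  qed
  have T: "((\<lambda>t. u t) \<longlongrightarrow> u 0) (at_right 0)" if "isCont u 0" for u :: "real \<Rightarrow> real"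
    using that by (auto simp: isCont_def intro: tendsto_mono[OF at_le[OF subset_UNIV]])
  have c1: "((\<lambda>t. G2W V E \<sigma> p (g t) x) \<longlongrightarrow> G2W V E \<sigma> p (g 0) x) (at_right 0)"
    unfolding g_def by (rule T[OF cont_G2W[OF p]])
  have c2: "((\<lambda>t. sDelta V E \<sigma> p (g t) x) \<longlongrightarrow> sDelta V E \<sigma> p (g 0) x) (at_right 0)"
    unfolding g_def by (rule T[OF cont_Del[OF p]])
  have c3: "((\<lambda>t. sGamma V E \<sigma> p (g t) (g t) x) \<longlongrightarrow> sGamma V E \<sigma> p (g 0) (g 0) x) (at_right 0)"
    unfolding g_def by (rule T[OF cont_Gam[OF p]])
  have qpos: "(2*p-2)/p > 0" using p by simp
  have lim: "(F \<longlongrightarrow> F 0) (at_right 0)"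
    unfolding F_def
    by (intro tendsto_intros c1 c2 c3) (use qpos in \<open>auto simp: sGamma_nonneg\<close>)
  have "F 0 \<ge> 0"
    by (rule tendsto_lowerbound[OF lim ev2]) simp
  moreover have "g 0 = f" by (simp add: g_def)
  ultimately show ?thesis by (simp add: F_def)
qed




lemma sum_swap:
  assumes G: "signed_graph V E \<sigma>"
  shows "(\<Sum>x\<in>V. \<Sum>y\<in>nbrs V E x. F x y) = (\<Sum>x\<in>V. \<Sum>y\<in>nbrs V E x. F y x)"
proof -
  have fin: "finite V" using G by (simp add: signed_graph_def)
  have "(\<Sum>x\<in>V. \<Sum>y\<in>nbrs V E x. F x y) = (\<Sum>y\<in>V. \<Sum>x\<in>{x. x \<in> V \<and> E x y}. F x y)"
    unfolding nbrs_def using sum.swap_restrict[OF fin fin, of F E] by simp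
  also have "\<dots> = (\<Sum>y\<in>V. \<Sum>x\<in>nbrs V E y. F x y)"
  proof (rule sum.cong[OF refl])
    fix y assume "y \<in> V"
    have "{x. x \<in> V \<and> E x y} = nbrs V E y"
      using G by (auto simp: nbrs_def signed_graph_def)
    then show "(\<Sum>x\<in>{x. x \<in> V \<and> E x y}. F x y) = (\<Sum>x\<in>nbrs V E y. F x y)" by simp
  qed
  finally show ?thesis .
qed

lemma deg_mult:
  assumes "finite (nbrs V E x)"
  shows "deg V E x * (c / deg V E x * (\<Sum>y\<in>nbrs V E x. F y)) = c * (\<Sum>y\<in>nbrs V E x. F y)"
proof (cases "deg V E x = 0")
  case True
  then have "nbrs V E x = {}" using assms by (simp add: deg_def)
  then show ?thesis by simp
qed simp

lemma edge_facts:
  assumes G: "signed_graph V E \<sigma>" and y: "y \<in> nbrs V E x"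
  shows "\<sigma> y x = \<sigma> x y" "\<sigma> x y = 1 \<or> \<sigma> x y = -1" "x \<in> V" "y \<in> V"
  using assms by (auto simp: signed_graph_def nbrs_def)

lemma pw_flip:
  assumes G: "signed_graph V E \<sigma>" and y: "y \<in> nbrs V E x"
  shows "pw p (\<sigma> y x * f x - f y) * \<sigma> y x = - pw p (\<sigma> x y * f y - f x)"
proof -
  have s: "\<sigma> y x = \<sigma> x y" "\<sigma> x y = 1 \<or> \<sigma> x y = -1" using edge_facts[OF G y] by auto
  have e: "\<sigma> y x * f x - f y = - (\<sigma> x y * (\<sigma> x y * f y - f x))"
    using s by (auto simp: algebra_simps)
  have ss: "\<sigma> x y * \<sigma> x y = 1" using s by auto
  have "pw p (\<sigma> y x * f x - f y) = - (\<sigma> x y * pw p (\<sigma> x y * f y - f x))"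
    by (simp only: e pw_minus pw_sign[OF s(2)])
  then show ?thesis using s(1) ss
    by (metis minus_mult_left mult.assoc mult.commute mult_1)
qed

lemma abs_flip:
  assumes G: "signed_graph V E \<sigma>" and y: "y \<in> nbrs V E x"
  shows "\<bar>\<sigma> y x * f x - f y\<bar> = \<bar>\<sigma> x y * f y - f x\<bar>"
  using edge_facts[OF G y] by auto

lemma deg_Delta:
  assumes G: "signed_graph V E \<sigma>"
  shows "deg V E x * sDelta V E \<sigma> p f x = (\<Sum>y\<in>nbrs V E x. pw p (\<sigma> x y * f y - f x))"
  unfolding sDelta_def using deg_mult[OF fin_nbrs[OF G], of x 1] by simp

lemma deg_Gamma:
  assumes G: "signed_graph V E \<sigma>"
  shows "deg V E x * sGamma V E \<sigma> p f g x
     = 1 / 2 * (\<Sum>y\<in>nbrs V E x. pw p (\<sigma> x y * f y - f x) * (\<sigma> x y * g y - g x))"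
proof -
  have "sGamma V E \<sigma> p f g x = (1/2) / deg V E x *
     (\<Sum>y\<in>nbrs V E x. pw p (\<sigma> x y * f y - f x) * (\<sigma> x y * g y - g x))"
    by (simp add: sGamma_def pw_def)
  then show ?thesis using deg_mult[OF fin_nbrs[OF G], of x "1/2"] by simp
qed

lemma Gamma_parts:
  assumes G: "signed_graph V E \<sigma>"
  shows "(\<Sum>x\<in>V. deg V E x * sGamma V E \<sigma> p f g x)
       = - (\<Sum>x\<in>V. g x * (deg V E x * sDelta V E \<sigma> p f x))"
proof -
  let ?a = "\<lambda>x y. pw p (\<sigma> x y * f y - f x)"
  have A: "(\<Sum>x\<in>V. \<Sum>y\<in>nbrs V E x. ?a x y * (\<sigma> x y * g y))
        = (\<Sum>x\<in>V. \<Sum>y\<in>nbrs V E x. ?a y x * (\<sigma> y x * g x))"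
    by (rule sum_swap[OF G])
  also have "\<dots> = (\<Sum>x\<in>V. \<Sum>y\<in>nbrs V E x. - (?a x y * g x))"
  proof (intro sum.cong refl)
    fix x y assume "y \<in> nbrs V E x"
    from pw_flip[OF G this, of p f] show "?a y x * (\<sigma> y x * g x) = - (?a x y * g x)"
      by (simp add: algebra_simps)
  qed
  finally have A': "(\<Sum>x\<in>V. \<Sum>y\<in>nbrs V E x. ?a x y * (\<sigma> x y * g y))
      = - (\<Sum>x\<in>V. g x * (\<Sum>y\<in>nbrs V E x. ?a x y))"
    by (simp add: sum_negf sum_distrib_left mult.commute)
  have "(\<Sum>x\<in>V. deg V E x * sGamma V E \<sigma> p f g x)
      = 1/2 * (\<Sum>x\<in>V. \<Sum>y\<in>nbrs V E x. ?a x y * (\<sigma> x y * g y) - ?a x y * g x)"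
    by (simp add: deg_Gamma[OF G] sum_distrib_left algebra_simps)
  also have "\<dots> = 1/2 * ((\<Sum>x\<in>V. \<Sum>y\<in>nbrs V E x. ?a x y * (\<sigma> x y * g y))
       - (\<Sum>x\<in>V. g x * (\<Sum>y\<in>nbrs V E x. ?a x y)))"
    by (simp add: sum_subtractf sum_distrib_left mult.commute)
  also have "\<dots> = - (\<Sum>x\<in>V. g x * (\<Sum>y\<in>nbrs V E x. ?a x y))"
    using A' by simp
  finally show ?thesis by (simp add: deg_Delta[OF G])
qed

lemma L_zero:
  assumes G: "signed_graph V E \<sigma>"
  shows "(\<Sum>x\<in>V. \<Sum>y\<in>nbrs V E x. W p (\<sigma> x y * f y - f x) * (U y - U x)) = 0"
proof -
  let ?S = "(\<Sum>x\<in>V. \<Sum>y\<in>nbrs V E x. W p (\<sigma> x y * f y - f x) * (U y - U x))"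
  have "?S = (\<Sum>x\<in>V. \<Sum>y\<in>nbrs V E x. W p (\<sigma> y x * f x - f y) * (U x - U y))"
    by (rule sum_swap[OF G])
  also have "\<dots> = (\<Sum>x\<in>V. \<Sum>y\<in>nbrs V E x. - (W p (\<sigma> x y * f y - f x) * (U y - U x)))"
  proof (intro sum.cong refl)
    fix x y assume y: "y \<in> nbrs V E x"
    have "W p (\<sigma> y x * f x - f y) = W p (\<sigma> x y * f y - f x)"
      using abs_flip[OF G y, of f] W_abs by metis
    then show "W p (\<sigma> y x * f x - f y) * (U x - U y) = - (W p (\<sigma> x y * f y - f x) * (U y - U x))"
      by (simp add: algebra_simps)
  qed
  also have "\<dots> = - ?S" by (simp add: sum_negf)
  finally show ?thesis by simp
qed




lemma deg_mult2:
  assumes "finite (nbrs V E x)"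
  shows "deg V E x * (c * (1 / deg V E x * (\<Sum>y\<in>nbrs V E x. F y))) = c * (\<Sum>y\<in>nbrs V E x. F y)"
proof (cases "deg V E x = 0")
  case True
  then have "nbrs V E x = {}" using assms by (simp add: deg_def)
  then show ?thesis by simp
qed simp

theorem theorem4p10:
  fixes V :: "'a set" and E :: "'a \<Rightarrow> 'a \<Rightarrow> bool" and \<sigma> :: "'a \<Rightarrow> 'a \<Rightarrow> real"
    and p K N lam :: real
  assumes "signed_graph V E \<sigma>"
    and "CDp V E \<sigma> p K N"
    and "p \<ge> 2" and "N > 1" and "K > 0"
    and "first_nonzero_eigenvalue V E \<sigma> p lam"
  shows "lam \<ge> (1 / vol V E) powr ((p - 2) / 2) * (N * K / (N - 1)) powr (p / 2)"
proof -
  note G = assms(1)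
  have p: "p \<ge> 2" and N: "N > 1" and K: "K > 0" using assms by auto
  have fin: "finite V" using G by (simp add: signed_graph_def)
  from assms(6) obtain f where fnz: "\<exists>x\<in>V. f x \<noteq> 0"
      and eig: "\<forall>x\<in>V. - sDelta V E \<sigma> p f x = lam * pw p (f x)" and lam0: "lam \<noteq> 0"
    unfolding first_nonzero_eigenvalue_def is_eigenvalue_def by blast
  define d where "d = deg V E"
  define q where "q = (2*p-2)/p"
  define S where "S = (\<Sum>x\<in>V. d x * \<bar>f x\<bar> powr p)"
  define P where "P = (\<Sum>x\<in>V. d x * (pw p (f x))\<^sup>2)"
  define Q where "Q = (\<Sum>x\<in>V. d x * (sGamma V E \<sigma> p f f x) powr q)"
  have dnn: "\<And>x. d x \<ge> 0" by (simp add: d_def deg_def)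
  have d01: "\<And>x. d x = 0 \<or> d x \<ge> 1" by (simp add: d_def deg_def, linarith)
  have D: "\<And>x. x \<in> V \<Longrightarrow> sDelta V E \<sigma> p f x = - lam * pw p (f x)"
    using eig by (metis minus_minus mult_minus_left)
  have sumD2: "(\<Sum>x\<in>V. d x * (sDelta V E \<sigma> p f x)\<^sup>2) = lam\<^sup>2 * P"
    unfolding P_def sum_distrib_left
    by (rule sum.cong[OF refl]) (simp add: D power_mult_distrib)
  have sumG2: "(\<Sum>x\<in>V. d x * G2W V E \<sigma> p f x) = lam\<^sup>2 * P"
  proof -
    have "\<And>x. d x * G2W V E \<sigma> p f x = 1/2 * (\<Sum>y\<in>nbrs V E x. W p (\<sigma> x y * f y - f x)
         * (sGamma V E \<sigma> p f f y - sGamma V E \<sigma> p f f x))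
         - d x * sGamma V E \<sigma> p f (sDelta V E \<sigma> p f) x"
      unfolding G2W_def d_def right_diff_distrib deg_mult2[OF fin_nbrs[OF G]] ..
    then have "(\<Sum>x\<in>V. d x * G2W V E \<sigma> p f x)
        = 1/2 * (\<Sum>x\<in>V. \<Sum>y\<in>nbrs V E x. W p (\<sigma> x y * f y - f x)
         * (sGamma V E \<sigma> p f f y - sGamma V E \<sigma> p f f x))
         - (\<Sum>x\<in>V. d x * sGamma V E \<sigma> p f (sDelta V E \<sigma> p f) x)"
      by (simp add: sum_subtractf sum_distrib_left)
    also have "\<dots> = - (\<Sum>x\<in>V. d x * sGamma V E \<sigma> p f (sDelta V E \<sigma> p f) x)"
      by (simp add: L_zero[OF G])
    also have "\<dots> = (\<Sum>x\<in>V. sDelta V E \<sigma> p f x * (d x * sDelta V E \<sigma> p f x))"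
      unfolding d_def by (simp add: Gamma_parts[OF G])
    also have "\<dots> = (\<Sum>x\<in>V. d x * (sDelta V E \<sigma> p f x)\<^sup>2)"
      by (simp add: power2_eq_square algebra_simps)
    finally show ?thesis using sumD2 by simp
  qed
  have CDsum: "(\<Sum>x\<in>V. d x * G2W V E \<sigma> p f x) \<ge> (1/N) * (lam\<^sup>2 * P) + K * Q"
  proof -
    have "(\<Sum>x\<in>V. d x * G2W V E \<sigma> p f x) \<ge> (\<Sum>x\<in>V. d x * ((1/N) * (sDelta V E \<sigma> p f x)\<^sup>2
           + K * (sGamma V E \<sigma> p f f x) powr q))"
      by (intro sum_mono mult_left_mono dnn) (use CD_ext[OF G assms(2) p] in \<open>auto simp: q_def\<close>)
    also have "(\<Sum>x\<in>V. d x * ((1/N) * (sDelta V E \<sigma> p f x)\<^sup>2 + K * (sGamma V E \<sigma> p f f x) powr q))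
        = (1/N) * (\<Sum>x\<in>V. d x * (sDelta V E \<sigma> p f x)\<^sup>2) + K * Q"
      by (simp add: Q_def sum.distrib sum_distrib_left algebra_simps)
    finally show ?thesis using sumD2 by simp
  qed
  have ineq: "(1 - 1/N) * lam\<^sup>2 * P \<ge> K * Q"
    using CDsum sumG2 by (simp add: algebra_simps)
  have GamSum: "(\<Sum>x\<in>V. d x * sGamma V E \<sigma> p f f x) = lam * S"
  proof -
    have "(\<Sum>x\<in>V. d x * sGamma V E \<sigma> p f f x) = - (\<Sum>x\<in>V. f x * (d x * sDelta V E \<sigma> p f x))"
      unfolding d_def by (rule Gamma_parts[OF G])
    also have "\<dots> = (\<Sum>x\<in>V. lam * (d x * (f x * pw p (f x))))"
      by (simp add: sum_negf[symmetric] D algebra_simps)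
    also have "\<dots> = lam * S" by (simp add: S_def f_pw sum_distrib_left)
    finally show ?thesis .
  qed
  obtain x0 where x0: "x0 \<in> V" "f x0 \<noteq> 0" using fnz by blast
  have dx0: "d x0 \<ge> 1"
  proof (rule ccontr)
    assume "\<not> d x0 \<ge> 1"
    then have "d x0 = 0" using d01 by blast
    then have "nbrs V E x0 = {}" using fin_nbrs[OF G, of x0] by (simp add: d_def deg_def)
    then have "sDelta V E \<sigma> p f x0 = 0" by (simp add: sDelta_def)
    then have "lam * pw p (f x0) = 0" using D[OF x0(1)] by simp
    then show False using lam0 pw_nz[OF x0(2)] by simp
  qed
  have Sterm: "\<And>x. x \<in> V \<Longrightarrow> d x * \<bar>f x\<bar> powr p \<le> S"
    unfolding S_def by (rule member_le_sum) (auto intro: mult_nonneg_nonneg dnn fin)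
  have Spos: "S > 0"
  proof -
    have "0 < d x0 * \<bar>f x0\<bar> powr p" using dx0 x0 by simp
    then show ?thesis using Sterm[OF x0(1)] by linarith
  qed
  have volpos: "vol V E > 0"
  proof -
    have "d x0 \<le> vol V E" unfolding vol_def d_def[symmetric]
      by (rule member_le_sum) (auto intro: dnn x0 fin)
    then show ?thesis using dx0 by linarith
  qed
  have lampos: "lam > 0"
  proof -
    have "0 \<le> (\<Sum>x\<in>V. d x * sGamma V E \<sigma> p f f x)"
      by (intro sum_nonneg mult_nonneg_nonneg dnn sGamma_nonneg)
    then have "0 \<le> lam * S" using GamSum by simp
    then have "lam \<ge> 0" using Spos by (simp add: zero_le_mult_iff)
    then show ?thesis using lam0 by simp
  qed
  have q1: "q \<ge> 1" using p by (simp add: q_def field_simps)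
  have Jen: "Q \<ge> vol V E powr (1 - q) * (lam * S) powr q"
  proof -
    have "(\<Sum>x\<in>V. d x) powr (1 - q) * (\<Sum>x\<in>V. d x * sGamma V E \<sigma> p f f x) powr q
        \<le> (\<Sum>x\<in>V. d x * (sGamma V E \<sigma> p f f x) powr q)"
      by (rule jensen_powr[OF fin]) (use x0 dnn sGamma_nonneg q1 volpos in \<open>auto simp: vol_def d_def\<close>)
    then show ?thesis unfolding Q_def GamSum by (simp add: vol_def d_def[symmetric])
  qed
  have PS: "P \<le> S powr q"
  proof -
    have "P \<le> (\<Sum>x\<in>V. d x * \<bar>f x\<bar> powr p * S powr ((p - 2) / p))"
      unfolding P_def
    proof (rule sum_mono)
      fix x assume x: "x \<in> V"
      show "d x * (pw p (f x))\<^sup>2 \<le> d x * \<bar>f x\<bar> powr p * S powr ((p - 2) / p)"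
      proof (cases "d x = 0")
        case False
        then have dx: "d x \<ge> 1" using d01 by blast
        have "\<bar>f x\<bar> powr p \<le> d x * \<bar>f x\<bar> powr p"
          using dx mult_right_mono[OF dx, of "\<bar>f x\<bar> powr p"] by simp
        also have "\<dots> \<le> S" by (rule Sterm[OF x])
        finally have le: "\<bar>f x\<bar> powr p \<le> S" .
        have "\<bar>f x\<bar> powr (p - 2) = (\<bar>f x\<bar> powr p) powr ((p - 2) / p)"
          using p by (simp add: powr_powr)
        also have "\<dots> \<le> S powr ((p - 2) / p)"
          by (rule powr_mono2) (use p le in auto)
        finally have "\<bar>f x\<bar> powr (p - 2) \<le> S powr ((p - 2) / p)" .
        then show ?thesis unfolding pw_sq using dnn[of x]
          by (simp add: mult.assoc mult_left_mono)
      qed simp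
    qed
    also have "\<dots> = S * S powr ((p - 2) / p)"
      by (simp add: S_def sum_distrib_right)
    also have "\<dots> = S powr q"
    proof -
      have "S * S powr ((p - 2) / p) = S powr (1 + (p - 2) / p)" using Spos by (simp add: powr_add)
      moreover have "1 + (p - 2) / p = q" using p by (simp add: q_def field_simps)
      ultimately show ?thesis by simp
    qed
    finally show ?thesis .
  qed
  define v where "v = vol V E"
  define C0 where "C0 = N * K / (N - 1)"
  have vpos: "v > 0" using volpos by (simp add: v_def)
  have C0pos: "C0 > 0" using N K by (simp add: C0_def)
  have Sq: "S powr q > 0" using Spos by simp
  have a: "K * (v powr (1 - q) * lam powr q * S powr q) \<le> (1 - 1/N) * lam\<^sup>2 * S powr q"
  proof -
    have "K * (v powr (1 - q) * (lam * S) powr q) \<le> K * Q"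
      using Jen K by (simp add: v_def)
    also have "\<dots> \<le> (1 - 1/N) * lam\<^sup>2 * P" by (rule ineq)
    also have "\<dots> \<le> (1 - 1/N) * lam\<^sup>2 * S powr q"
      by (rule mult_left_mono[OF PS]) (use N in simp)
    finally show ?thesis using lampos Spos by (simp add: powr_mult mult.assoc)
  qed
  have b: "K * v powr (1 - q) * lam powr q \<le> (1 - 1/N) * lam\<^sup>2"
  proof -
    have "(K * v powr (1 - q) * lam powr q) * S powr q \<le> ((1 - 1/N) * lam\<^sup>2) * S powr q"
      using a by (simp add: mult.assoc)
    then show ?thesis using Sq by simp
  qed
  have l2: "lam\<^sup>2 = lam powr q * lam powr (2 / p)"
  proof -
    have "lam\<^sup>2 = lam powr 2" using lampos by (simp add: powr_numeral)
    also have "\<dots> = lam powr (q + 2 / p)" using p by (simp add: q_def field_simps)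
    also have "\<dots> = lam powr q * lam powr (2 / p)" by (simp add: powr_add)
    finally show ?thesis .
  qed
  have c: "K * v powr (1 - q) \<le> (1 - 1/N) * lam powr (2 / p)"
  proof -
    have "(K * v powr (1 - q)) * lam powr q \<le> ((1 - 1/N) * lam powr (2 / p)) * lam powr q"
      using b l2 by (simp add: algebra_simps)
    then show ?thesis using lampos by simp
  qed
  have d: "C0 * v powr (1 - q) \<le> lam powr (2 / p)"
  proof -
    have "1 - 1/N > 0" using N by simp
    then have "K * v powr (1 - q) / (1 - 1/N) \<le> lam powr (2 / p)"
      using c by (simp add: divide_le_eq mult.commute)
    moreover have "K * v powr (1 - q) / (1 - 1/N) = C0 * v powr (1 - q)"
      using N by (simp add: C0_def field_simps)
    ultimately show ?thesis by simp
  qed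
  have e: "(C0 * v powr (1 - q)) powr (p / 2) \<le> lam"
  proof -
    have "(C0 * v powr (1 - q)) powr (p / 2) \<le> (lam powr (2 / p)) powr (p / 2)"
      by (rule powr_mono2) (use d C0pos vpos p in auto)
    also have "\<dots> = lam" using p lampos by (simp add: powr_powr)
    finally show ?thesis .
  qed
  have f: "(C0 * v powr (1 - q)) powr (p / 2) = (1 / v) powr ((p - 2) / 2) * C0 powr (p / 2)"
  proof -
    have ex: "(1 - q) * (p / 2) = - ((p - 2) / 2)" using p by (simp add: q_def field_simps)
    have vv: "v powr (- ((p - 2) / 2)) = (1 / v) powr ((p - 2) / 2)"
      using vpos by (simp only: powr_minus_divide powr_divide[of 1 v] powr_one_eq_one)
    have "(C0 * v powr (1 - q)) powr (p / 2) = C0 powr (p / 2) * v powr ((1 - q) * (p / 2))"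
      using C0pos vpos by (simp add: powr_mult powr_powr)
    also have "\<dots> = C0 powr (p / 2) * (1 / v) powr ((p - 2) / 2)"
      by (simp only: ex vv)
    finally show ?thesis by (simp only: mult.commute)
  qed
  show ?thesis using e f by (simp add: v_def C0_def)
qed


end
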